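(* Let $\varphi:\mathbb{R}^n\to\mathbb{R}$ be continuously differentiable with $\nabla\varphi$ Lipschitz continuous around $x\in\mathbb{R}^n$. Suppose $\nabla\varphi(x)\neq0$ and that $\partial^2\varphi(x)$ is positive-definite, i.e. $\langle z,u\rangle>0$ for all $u\neq0$ and all $z\in\partial^2\varphi(x)(u)$. Then there exists a nonzero $d\in\mathbb{R}^n$ with $-\nabla\varphi(x)\in\partial^2\varphi(x)(d)$. Moreover, every such $d$ satisfies $\langle\nabla\varphi(x),d\rangle<0$. Consequently, for each $\sigma\in(0,1)$ and each $d$ with $-\nabla\varphi(x)\in\partial^2\varphi(x)(d)$ there is $\delta>0$ such that $\varphi(x+\tau d)\le\varphi(x)+\sigma\tau\langle\nabla\varphi(x),d\rangle$ for all $\tau\in(0,\delta)$.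
   Context: Regular normal cone: $\widehat N_\Omega(\bar z):=\{v\mid \limsup_{z\to\bar z,\,z\in\Omega}\langle v,z-\bar z\rangle/\|z-\bar z\|\le 0\}$; limiting normal cone $N_\Omega(\bar z)$: all $v$ such that there are $z_k\to\bar z$, $z_k\in\Omega$, $v_k\to v$, $v_k\in\widehat N_\Omega(z_k)$. Coderivative of $F:\mathbb{R}^n\rightrightarrows\mathbb{R}^m$: $D^*F(\bar x,\bar y)(v):=\{u\mid (u,-v)\in N_{\operatorname{gph}F}(\bar x,\bar y)\}$. Second-order subdifferential: $\partial^2\varphi(x)(u):=D^*(\nabla\varphi)(x,\nabla\varphi(x))(u)$. *)

theory Defs
  imports "HOL-Analysis.Analysis" "HOL-Library.Liminf_Limsup"
begin

definition regular_normal_cone :: "'a::euclidean_space set \<Rightarrow> 'a \<Rightarrow> 'a set" where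
  "regular_normal_cone \<Omega> zb =
     {v. zb \<in> \<Omega> \<and>
         Limsup (at zb within \<Omega>) (\<lambda>z. ereal (inner v (z - zb) / norm (z - zb))) \<le> 0}"

definition limiting_normal_cone :: "'a::euclidean_space set \<Rightarrow> 'a \<Rightarrow> 'a set" where
  "limiting_normal_cone \<Omega> zb =
     {v. \<exists>z vs. (\<forall>k. z k \<in> \<Omega>) \<and> z \<longlonglongrightarrow> zb \<and> vs \<longlonglongrightarrow> v \<and>
                (\<forall>k. vs k \<in> regular_normal_cone \<Omega> (z k))}"

definition graph_of :: "('a \<Rightarrow> 'b set) \<Rightarrow> ('a \<times> 'b) set" where
  "graph_of F = {(x, y). y \<in> F x}"

definition coderivative ::
  "('a::euclidean_space \<Rightarrow> 'b::euclidean_space set) \<Rightarrow> 'a \<Rightarrow> 'b \<Rightarrow> 'b \<Rightarrow> 'a set" where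
  "coderivative F xb yb v = {u. (u, - v) \<in> limiting_normal_cone (graph_of F) (xb, yb)}"

text \<open>Second-order subdifferential of a C^1 function, given through its gradient map g.\<close>
definition second_order_subdiff :: "('a::euclidean_space \<Rightarrow> 'a) \<Rightarrow> 'a \<Rightarrow> 'a \<Rightarrow> 'a set" where
  "second_order_subdiff g x u = coderivative (\<lambda>y. {g y}) x (g x) u"

end

theory Submission
  imports Defs
begin

lemma rncD:
  assumes "v \<in> regular_normal_cone \<Omega> zb" "\<epsilon> > 0"
  shows "\<exists>\<delta>>0. \<forall>z\<in>\<Omega>. z \<noteq> zb \<and> dist z zb < \<delta> \<longrightarrow> inner v (z - zb) \<le> \<epsilon> * norm (z - zb)"
proof -
  have "Limsup (at zb within \<Omega>) (\<lambda>z. ereal (inner v (z - zb) / norm (z - zb))) \<le> 0"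
    using assms(1) unfolding regular_normal_cone_def by auto
  then have "eventually (\<lambda>z. ereal \<epsilon> > ereal (inner v (z - zb) / norm (z - zb))) (at zb within \<Omega>)"
    using Limsup_le_iff assms(2) by (metis ereal_less(2) zero_ereal_def)
  then obtain \<delta> where d: "\<delta> > 0" "\<forall>z\<in>\<Omega>. z \<noteq> zb \<and> dist z zb < \<delta> \<longrightarrow> inner v (z - zb) / norm (z - zb) < \<epsilon>"
    unfolding eventually_at by auto
  show ?thesis
  proof (intro exI[of _ \<delta>] conjI ballI impI)
    fix z assume "z \<in> \<Omega>" "z \<noteq> zb \<and> dist z zb < \<delta>"
    with d have "inner v (z - zb) / norm (z - zb) < \<epsilon>" by auto
    moreover have "norm (z - zb) > 0" using \<open>z \<noteq> zb \<and> _\<close> by auto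
    ultimately show "inner v (z - zb) \<le> \<epsilon> * norm (z - zb)"
      by (simp add: divide_less_eq mult.commute)
  qed (use d in auto)
qed

lemma rncI:
  assumes "zb \<in> \<Omega>" "\<delta> > 0"
    and b: "\<And>z. z \<in> \<Omega> \<Longrightarrow> dist z zb < \<delta> \<Longrightarrow> inner v (z - zb) \<le> C * (norm (z - zb))^2"
  shows "v \<in> regular_normal_cone \<Omega> zb"
proof -
  have "Limsup (at zb within \<Omega>) (\<lambda>z. ereal (inner v (z - zb) / norm (z - zb))) \<le> 0"
    unfolding Limsup_le_iff
  proof (intro allI impI)
    fix y :: ereal assume "y > 0"
    show "eventually (\<lambda>z. y > ereal (inner v (z - zb) / norm (z - zb))) (at zb within \<Omega>)"
    proof (cases y)
      case (real r)
      with \<open>y > 0\<close> have r: "r > 0" by auto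
      define d where "d = min \<delta> (r / (\<bar>C\<bar> + 1))"
      have d: "d > 0" using r assms(2) by (simp add: d_def)
      show ?thesis unfolding eventually_at
      proof (intro exI[of _ d] conjI ballI impI)
        fix z assume z: "z \<in> \<Omega>" "z \<noteq> zb \<and> dist z zb < d"
        have n: "norm (z - zb) > 0" "norm (z - zb) < r / (\<bar>C\<bar> + 1)" "norm (z - zb) < \<delta>"
          using z by (auto simp: d_def dist_norm)
        have "inner v (z - zb) \<le> C * (norm (z - zb))^2" using b z n by (auto simp: dist_norm)
        also have "\<dots> \<le> \<bar>C\<bar> * (norm (z - zb))^2" by (simp add: mult_right_mono)
        finally have 1: "inner v (z - zb) / norm (z - zb) \<le> \<bar>C\<bar> * norm (z - zb)"
          using n by (simp add: divide_le_eq power2_eq_square mult.assoc)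
        have "\<bar>C\<bar> * norm (z - zb) \<le> \<bar>C\<bar> * (r / (\<bar>C\<bar> + 1))"
          using n(2) by (intro mult_left_mono) auto
        also have "\<dots> < r" using r by (simp add: field_simps)
        finally show "y > ereal (inner v (z - zb) / norm (z - zb))"
          using 1 real by simp
      qed (use d in auto)
    qed (use \<open>y > 0\<close> in auto)
  qed
  then show ?thesis using assms(1) unfolding regular_normal_cone_def by auto
qed


lemma graph_single: "graph_of (\<lambda>y. {g y}) = {(y, g y) | y. True}"
  unfolding graph_of_def by auto

lemma rnc_lip_bound:
  fixes g :: "'a::euclidean_space \<Rightarrow> 'b::euclidean_space"
  assumes lip: "L-lipschitz_on U g" and U: "open U" "y \<in> U"
    and v: "(a, b) \<in> regular_normal_cone (graph_of (\<lambda>y. {g y})) (y, g y)"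
  shows "norm a \<le> L * norm b"
proof (rule ccontr)
  assume "\<not> ?thesis"
  then have lt: "L * norm b < norm a" by simp
  have L0: "L \<ge> 0" using lip by (simp add: lipschitz_on_def)
  then have a0: "a \<noteq> 0" using lt by (metis mult_nonneg_nonneg norm_eq_zero norm_ge_zero not_less)
  define \<epsilon> where "\<epsilon> = (norm a - L * norm b) / (2 * (1 + L))"
  have e0: "\<epsilon> > 0" using lt L0 by (simp add: \<epsilon>_def)
  obtain \<delta> where d: "\<delta> > 0" and dd: "\<forall>z\<in>graph_of (\<lambda>y. {g y}). z \<noteq> (y, g y) \<and> dist z (y, g y) < \<delta>
      \<longrightarrow> inner (a, b) (z - (y, g y)) \<le> \<epsilon> * norm (z - (y, g y))"
    using rncD[OF v e0] by blast
  obtain \<rho> where r: "\<rho> > 0" "ball y \<rho> \<subseteq> U" using U open_contains_ball by blast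
  define t where "t = min (\<rho> / 2) (\<delta> / (2 * (1 + L)))"
  have t0: "t > 0" using r d L0 by (simp add: t_def)
  define h where "h = t *\<^sub>R (a /\<^sub>R norm a)"
  have nh: "norm h = t" using t0 a0 by (simp add: h_def)
  have yU: "y + h \<in> U" using r nh t0 by (intro subsetD[OF r(2)]) (auto simp: dist_norm t_def)
  have lg: "norm (g (y + h) - g y) \<le> L * t"
    using lip yU U nh unfolding lipschitz_on_def dist_norm by (metis add_diff_cancel_left')
  define z where "z = (y + h, g (y + h))"
  have zg: "z \<in> graph_of (\<lambda>y. {g y})" by (simp add: z_def graph_of_def)
  have zd: "z - (y, g y) = (h, g (y + h) - g y)" by (simp add: z_def)
  have nz: "norm (z - (y, g y)) \<le> t + L * t"
    using norm_Pair_le[of h "g (y + h) - g y"] nh lg zd by simp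
  have "z \<noteq> (y, g y)" using zd nh t0 by (auto simp: z_def)
  moreover have "dist z (y, g y) < \<delta>"
  proof -
    have "t + L * t = (1 + L) * t" by (simp add: algebra_simps)
    also have "\<dots> \<le> (1 + L) * (\<delta> / (2 * (1 + L)))" using L0 by (intro mult_left_mono) (auto simp: t_def)
    also have "\<dots> < \<delta>" using L0 d by (simp add: field_simps add_pos_nonneg)
    finally show ?thesis using nz by (simp add: dist_norm)
  qed
  ultimately have up: "inner (a, b) (z - (y, g y)) \<le> \<epsilon> * norm (z - (y, g y))" using dd zg by blast
  have ih: "inner a h = t * norm a" using a0 by (simp add: h_def inner_commute power2_norm_eq_inner[symmetric] power2_eq_square)
  have "inner b (g (y + h) - g y) \<ge> - (norm b * (L * t))"
    using Cauchy_Schwarz_ineq2[of b "g (y + h) - g y"] lg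
    by (smt (verit) mult_left_mono norm_ge_zero)
  then have low: "inner (a, b) (z - (y, g y)) \<ge> t * norm a - norm b * (L * t)"
    using ih zd by simp
  have "\<epsilon> * norm (z - (y, g y)) \<le> \<epsilon> * ((1 + L) * t)"
    using nz e0 by (intro mult_left_mono) (auto simp: algebra_simps)
  also have "\<dots> = t * (norm a - L * norm b) / 2" using L0 by (simp add: \<epsilon>_def field_simps)
  finally have "t * norm a - norm b * (L * t) \<le> t * (norm a - L * norm b) / 2" using up low by linarith
  then have "t * (norm a - L * norm b) \<le> 0" by (simp add: algebra_simps)
  then show False using t0 lt by (simp add: mult_le_0_iff)
qed


lemma quad_ident:
  fixes e u d :: "'a::real_inner"
  assumes "inner e e = 1"
  shows "(- a * inner e (u + d) + b / 2 * inner (u + d) (u + d) + K / 2 * (inner (u + d) (u + d) - (inner e (u + d))\<^sup>2))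
       - (- a * inner e u + b / 2 * inner u u + K / 2 * (inner u u - (inner e u)\<^sup>2))
     = inner (- a *\<^sub>R e + b *\<^sub>R u + K *\<^sub>R (u - inner e u *\<^sub>R e)) d
       + b / 2 * inner d d + K / 2 * (inner d d - (inner e d)\<^sup>2)"
  by (simp add: inner_add_left inner_add_right inner_diff_left inner_commute power2_eq_square algebra_simps)

lemma sq_bound: "(M::real) > 0 \<Longrightarrow> - L * n + M / 2 * n\<^sup>2 \<ge> - L\<^sup>2 / (2 * M)"
proof -
  assume M: "M > 0"
  have "0 \<le> (M * n - L)\<^sup>2 / (2 * M)" using M by simp
  also have "(M * n - L)\<^sup>2 / (2 * M) = - L * n + M / 2 * n\<^sup>2 + L\<^sup>2 / (2 * M)"
    using M by (simp add: field_simps power2_eq_square)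
  finally show ?thesis by simp
qed


lemma core:
  fixes g :: "'a::euclidean_space \<Rightarrow> 'a"
  assumes lip: "L-lipschitz_on (ball x \<epsilon>0) g" and e0: "\<epsilon>0 > 0"
    and cont: "continuous_on UNIV g"
    and nmr: "\<forall>c>0. \<forall>r>0. \<exists>y. dist y x < r \<and> norm (g y - g x) < c * norm (y - x)"
    and eta: "\<eta> > 0"
  shows "\<exists>y e z. dist y x < \<eta> \<and> dist y x < \<epsilon>0 \<and> norm e = 1 \<and>
           (z, - e) \<in> regular_normal_cone (graph_of (\<lambda>y. {g y})) (y, g y) \<and> inner z e \<le> \<eta>"
proof -
  have L0: "L \<ge> 0" using lip by (simp add: lipschitz_on_def)
  define a where "a = \<eta>"
  have a0: "a > 0" using eta by (simp add: a_def)
  define r where "r = min \<eta> \<epsilon>0 * a / (3 * (L + a))"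
  have r0: "r > 0" using a0 L0 eta e0 by (simp add: r_def)
  obtain y0 where y0: "dist y0 x < r" "norm (g y0 - g x) < a / 4 * norm (y0 - x)"
    using nmr r0 a0 by (meson divide_pos_pos zero_less_numeral)
  define t where "t = norm (y0 - x)"
  have t0: "t > 0" using y0(2) by (auto simp: t_def)
  have tr: "t < r" using y0(1) by (simp add: t_def dist_norm)
  define e where "e = (1 / t) *\<^sub>R (y0 - x)"
  have ne: "norm e = 1" using t0 by (simp add: e_def t_def)
  have ee: "inner e e = 1" using ne by (simp add: power2_norm_eq_inner[symmetric])
  have y0e: "y0 - x = t *\<^sub>R e" using t0 by (simp add: e_def)
  define b where "b = a / t"
  define K where "K = 2 * L\<^sup>2 / (a * t) + 1"
  define M where "M = b + K"
  have b0: "b > 0" using a0 t0 by (simp add: b_def)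
  have K0: "K \<ge> 0" using a0 t0 by (simp add: K_def)
  have M0: "M > 0" using b0 K0 by (simp add: M_def)
  define S where "S = 3 * (L + a) * t / a"
  have S0: "S > 0" using L0 a0 t0 by (simp add: S_def)
  have Sm: "S < min \<eta> \<epsilon>0"
  proof -
    have "S < 3 * (L + a) * r / a" using tr L0 a0 by (simp add: S_def divide_strict_right_mono)
    also have "\<dots> = min \<eta> \<epsilon>0"
    proof -
      have La: "L + a > 0" using L0 a0 by simp
      have "3 * (L + a) * (min \<eta> \<epsilon>0 * a / (3 * (L + a))) / a = min \<eta> \<epsilon>0 * a / a"
        using La by simp
      then show ?thesis using a0 unfolding r_def by simp
    qed
    finally show ?thesis .
  qed
  have tS: "t \<le> S"
  proof -
    have "1 * t \<le> (3 * (L + a) / a) * t" using L0 a0 t0 by (intro mult_right_mono) (auto simp: field_simps)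
    then show ?thesis by (simp add: S_def)
  qed
  define P where "P y = - a * inner e (y - x) + b / 2 * inner (y - x) (y - x)
      + K / 2 * (inner (y - x) (y - x) - (inner e (y - x))\<^sup>2)" for y
  define \<psi> where "\<psi> y = inner e (g y)" for y
  define \<Phi> where "\<Phi> y = \<psi> y + P y" for y
  define R where "R = cball x S \<inter> {y. inner e y \<ge> inner e x}"
  have cR: "compact R" unfolding R_def by (intro compact_Int_closed compact_cball closed_halfspace_ge)
  have y0R: "y0 \<in> R"
  proof -
    have "inner e (y0 - x) = t" using y0e ee by simp
    then have "inner e y0 \<ge> inner e x" using t0 by (simp add: inner_diff_right)
    then show ?thesis using tS by (auto simp: R_def dist_norm t_def norm_minus_commute)
  qed
  have cPhi: "continuous_on R \<Phi>"
    unfolding \<Phi>_def \<psi>_def P_def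
    by (intro continuous_intros continuous_on_subset[OF cont]) auto
  obtain ys where ysR: "ys \<in> R" and ysmin: "\<And>y. y \<in> R \<Longrightarrow> \<Phi> ys \<le> \<Phi> y"
    using continuous_attains_inf[OF cR _ cPhi] y0R by blast
  have Py0: "P y0 = - a * t / 2"
    using y0e ee t0 by (simp add: P_def b_def power2_eq_square field_simps)
  have "\<psi> y0 - \<psi> x \<le> norm (g y0 - g x)"
    using Cauchy_Schwarz_ineq2[of e "g y0 - g x"] ne by (simp add: \<psi>_def inner_diff_right)
  then have Phiy0: "\<Phi> y0 < \<psi> x - a * t / 4"
    using y0(2) Py0 by (simp add: \<Phi>_def t_def)
  define u where "u = ys - x"
  define n where "n = norm u"
  define s where "s = inner e u"
  have nS: "n \<le> S" and s0: "s \<ge> 0" using ysR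
    by (auto simp: R_def n_def u_def s_def dist_norm norm_minus_commute inner_diff_right)
  have sn: "s \<le> n" using Cauchy_Schwarz_ineq2[of e u] ne by (simp add: s_def n_def)
  have nn: "inner u u = n\<^sup>2" by (simp add: n_def power2_norm_eq_inner)
  have ysball: "ys \<in> ball x \<epsilon>0" using nS Sm by (simp add: dist_norm n_def u_def norm_minus_commute)
  have psiys: "\<psi> ys \<ge> \<psi> x - L * n"
  proof -
    have "norm (g ys - g x) \<le> L * n"
      using lip ysball e0 unfolding lipschitz_on_def by (auto simp: dist_norm n_def u_def)
    moreover have "\<bar>inner e (g ys - g x)\<bar> \<le> norm (g ys - g x)"
      using Cauchy_Schwarz_ineq2[of e "g ys - g x"] ne by simp
    ultimately show ?thesis by (simp add: \<psi>_def inner_diff_right)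
  qed
  have PhiE: "\<Phi> ys = \<psi> ys - a * s + b / 2 * n\<^sup>2 + K / 2 * (n\<^sup>2 - s\<^sup>2)"
    by (simp add: \<Phi>_def P_def u_def[symmetric] s_def[symmetric] nn)
  have lowPhi: "\<Phi> ys < \<psi> x - a * t / 4" using ysmin[OF y0R] Phiy0 by simp
  have spos: "s > 0"
  proof (rule ccontr)
    assume "\<not> s > 0" then have "s = 0" using s0 by simp
    then have "\<Phi> ys = \<psi> ys + M / 2 * n\<^sup>2" using PhiE by (simp add: M_def algebra_simps)
    also have "\<dots> \<ge> \<psi> x - L\<^sup>2 / (2 * M)" using psiys sq_bound[OF M0, of L n] by simp
    finally have 1: "\<Phi> ys \<ge> \<psi> x - L\<^sup>2 / (2 * M)" .
    have "a * t * b = a * a" using t0 by (simp add: b_def)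
    moreover have "a * t * K = 2 * L\<^sup>2 + a * t" using t0 a0 by (simp add: K_def distrib_left)
    ultimately have "a * t * M = a * a + 2 * L\<^sup>2 + a * t" by (simp add: M_def distrib_left)
    then have "2 * L\<^sup>2 < a * t * M" using a0 t0 by (simp add: add_pos_pos mult_pos_pos)
    then have "L\<^sup>2 / (2 * M) < a * t / 4" using M0 by (simp add: field_simps)
    then show False using 1 lowPhi by simp
  qed
  have nlt: "n < S"
  proof (rule ccontr)
    assume "\<not> n < S" then have nS': "n = S" using nS by simp
    have "K / 2 * (n\<^sup>2 - s\<^sup>2) \<ge> 0" using K0 sn s0 by (simp add: power_mono)
    moreover have "a * s \<le> a * S" using sn nS' a0 by (simp add: mult_left_mono)
    moreover have "\<Phi> ys = \<psi> ys - a * s + b / 2 * S\<^sup>2 + K / 2 * (n\<^sup>2 - s\<^sup>2)" using PhiE nS' by simp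
    moreover have "\<psi> ys \<ge> \<psi> x - L * S" using psiys nS' by simp
    ultimately have "\<Phi> ys \<ge> \<psi> x - L * S - a * S + b / 2 * S\<^sup>2"
      by linarith
    moreover have "b / 2 * S\<^sup>2 - L * S - a * S = 3 * (L + a)\<^sup>2 * t / (2 * a)"
      using a0 t0 by (simp add: b_def S_def field_simps power2_eq_square)
    moreover have "3 * (L + a)\<^sup>2 * t / (2 * a) > 0" using a0 t0 L0 by simp
    moreover have "a * t > 0" using a0 t0 by simp
    ultimately show False using lowPhi by linarith
  qed
  define Op where "Op = ball x S \<inter> {y. inner e y > inner e x}"
  have oO: "open Op" unfolding Op_def by (intro open_Int open_ball open_halfspace_gt)
  have ysO: "ys \<in> Op" using nlt spos
    by (auto simp: Op_def dist_norm n_def u_def s_def norm_minus_commute inner_diff_right)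
  have OR: "Op \<subseteq> R" by (auto simp: Op_def R_def)
  obtain \<delta> where d0: "\<delta> > 0" and dO: "ball ys \<delta> \<subseteq> Op" using oO ysO open_contains_ball by blast
  define G where "G = - a *\<^sub>R e + b *\<^sub>R u + K *\<^sub>R (u - inner e u *\<^sub>R e)"
  define z where "z = - G"
  have nc: "(z, - e) \<in> regular_normal_cone (graph_of (\<lambda>y. {g y})) (ys, g ys)"
  proof (rule rncI[OF _ d0, where C = "M / 2"])
    show "(ys, g ys) \<in> graph_of (\<lambda>y. {g y})" by (simp add: graph_of_def)
  next
    fix w assume wg: "w \<in> graph_of (\<lambda>y. {g y})" and wd: "dist w (ys, g ys) < \<delta>"
    obtain y' where w: "w = (y', g y')" using wg by (auto simp: graph_of_def)
    define D where "D = y' - ys"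
    have "dist y' ys < \<delta>" using wd dist_fst_le[of w "(ys, g ys)"] w by simp
    then have "y' \<in> ball ys \<delta>" by (simp add: dist_commute)
    then have "y' \<in> R" using dO OR by blast
    then have mn: "\<Phi> ys \<le> \<Phi> y'" by (rule ysmin)
    have yx: "y' - x = u + D" by (simp add: D_def u_def)
    have Pd: "P y' - P ys = inner G D + b / 2 * inner D D + K / 2 * (inner D D - (inner e D)\<^sup>2)"
      unfolding P_def yx u_def[symmetric] G_def using quad_ident[OF ee] by simp
    have wdiff: "w - (ys, g ys) = (D, g y' - g ys)" by (simp add: w D_def)
    have "inner (z, - e) (w - (ys, g ys)) = - inner G D - (\<psi> y' - \<psi> ys)"
      by (simp add: wdiff z_def \<psi>_def inner_diff_right)
    also have "\<dots> = - (\<Phi> y' - \<Phi> ys) + b / 2 * inner D D + K / 2 * (inner D D - (inner e D)\<^sup>2)"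
      using Pd by (simp add: \<Phi>_def)
    also have "\<dots> \<le> b / 2 * inner D D + K / 2 * (inner D D - (inner e D)\<^sup>2)" using mn by simp
    also have "\<dots> \<le> M / 2 * inner D D" using K0 by (simp add: M_def algebra_simps mult_left_mono)
    also have "\<dots> = M / 2 * (norm D)\<^sup>2" by (simp add: power2_norm_eq_inner)
    also have "\<dots> \<le> M / 2 * (norm (w - (ys, g ys)))\<^sup>2"
      using M0 norm_fst_le[of D "g y' - g ys"] wdiff by (auto intro!: mult_left_mono power_mono)
    finally show "inner (z, - e) (w - (ys, g ys)) \<le> M / 2 * (norm (w - (ys, g ys)))\<^sup>2" .
  qed
  have "inner z e = a - b * s"
    using ee by (simp add: z_def G_def s_def inner_commute inner_diff_left algebra_simps)
  then have ze: "inner z e \<le> \<eta>" using b0 spos by (simp add: a_def)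
  have "dist ys x < min \<eta> \<epsilon>0" using nlt Sm by (simp add: dist_norm n_def u_def)
  then show ?thesis using nc ze ne by auto
qed


lemma lnc_lip_bound:
  fixes g :: "'a::euclidean_space \<Rightarrow> 'b::euclidean_space"
  assumes lip: "L-lipschitz_on (ball x \<epsilon>) g" and e: "\<epsilon> > 0"
    and v: "(a, b) \<in> limiting_normal_cone (graph_of (\<lambda>y. {g y})) (x, g x)"
  shows "norm a \<le> L * norm b"
proof -
  obtain zs vs where zs: "\<forall>k. zs k \<in> graph_of (\<lambda>y. {g y})" "zs \<longlonglongrightarrow> (x, g x)"
    and vs: "vs \<longlonglongrightarrow> (a, b)" "\<forall>k. vs k \<in> regular_normal_cone (graph_of (\<lambda>y. {g y})) (zs k)"
    using v unfolding limiting_normal_cone_def by blast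
  have zk: "zs k = (fst (zs k), g (fst (zs k)))" for k
  proof -
    have "zs k \<in> graph_of (\<lambda>y. {g y})" using zs(1) by blast
    then show ?thesis unfolding graph_of_def by (cases "zs k") auto
  qed
  have "(\<lambda>k. fst (zs k)) \<longlonglongrightarrow> x" using tendsto_fst[OF zs(2)] by simp
  then have ev: "eventually (\<lambda>k. fst (zs k) \<in> ball x \<epsilon>) sequentially"
    using e by (simp add: tendsto_iff dist_commute)
  have "eventually (\<lambda>k. norm (fst (vs k)) \<le> L * norm (snd (vs k))) sequentially"
  proof (rule eventually_mono[OF ev])
    fix k assume "fst (zs k) \<in> ball x \<epsilon>"
    moreover have "(fst (vs k), snd (vs k)) \<in> regular_normal_cone (graph_of (\<lambda>y. {g y})) (fst (zs k), g (fst (zs k)))"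
      using vs(2) zk[of k] by simp
    ultimately show "norm (fst (vs k)) \<le> L * norm (snd (vs k))"
      using rnc_lip_bound[OF lip open_ball] by blast
  qed
  moreover have "(\<lambda>k. norm (fst (vs k))) \<longlonglongrightarrow> norm a" using tendsto_norm[OF tendsto_fst[OF vs(1)]] by simp
  moreover have "(\<lambda>k. L * norm (snd (vs k))) \<longlonglongrightarrow> L * norm b"
    using tendsto_mult_left[OF tendsto_norm[OF tendsto_snd[OF vs(1)]]] by simp
  ultimately show ?thesis using tendsto_le[OF trivial_limit_sequentially] by blast
qed

lemma metric_reg:
  fixes g :: "'a::euclidean_space \<Rightarrow> 'a"
  assumes lip: "L-lipschitz_on (ball x \<epsilon>0) g" and e0: "\<epsilon>0 > 0"
    and cont: "continuous_on UNIV g"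
    and pd: "\<And>u z. u \<noteq> 0 \<Longrightarrow> z \<in> second_order_subdiff g x u \<Longrightarrow> inner z u > 0"
  shows "\<exists>c>0. \<exists>r>0. \<forall>y. dist y x < r \<longrightarrow> c * norm (y - x) \<le> norm (g y - g x)"
proof (rule ccontr)
  assume "\<not> ?thesis"
  then have nmr: "\<forall>c>0. \<forall>r>0. \<exists>y. dist y x < r \<and> norm (g y - g x) < c * norm (y - x)"
    by (meson not_le)
  have "\<forall>k. \<exists>y e z. dist y x < inverse (real (Suc k)) \<and> dist y x < \<epsilon>0 \<and> norm e = 1 \<and>
           (z, - e) \<in> regular_normal_cone (graph_of (\<lambda>y. {g y})) (y, g y) \<and> inner z e \<le> inverse (real (Suc k))"
    using core[OF lip e0 cont nmr] by simp
  then obtain Y E Z where YEZ: "\<And>k. dist (Y k) x < inverse (real (Suc k))" "\<And>k. dist (Y k) x < \<epsilon>0"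
      "\<And>k. norm (E k) = 1" "\<And>k. (Z k, - E k) \<in> regular_normal_cone (graph_of (\<lambda>y. {g y})) (Y k, g (Y k))"
      "\<And>k. inner (Z k) (E k) \<le> inverse (real (Suc k))"
    by metis
  have Zb: "norm (Z k) \<le> L" for k
    using rnc_lip_bound[OF lip open_ball _ YEZ(4)[of k]] YEZ(2)[of k] YEZ(3)[of k] by (simp add: dist_commute)
  have sc: "seq_compact (cball (0::'a) L \<times> sphere (0::'a) 1)"
    by (intro compact_imp_seq_compact compact_Times compact_cball compact_sphere)
  have mem: "\<forall>k. (Z k, E k) \<in> cball 0 L \<times> sphere 0 1" using Zb YEZ(3) by simp
  obtain l r where l: "l \<in> cball 0 L \<times> sphere 0 1" and r: "strict_mono r"
    and lim: "((\<lambda>k. (Z k, E k)) \<circ> r) \<longlonglongrightarrow> l"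
    using seq_compactE[OF sc mem] by blast
  obtain z e where lze: "l = (z, e)" by (cases l)
  have ne: "norm e = 1" using l lze by simp
  have Zlim: "(\<lambda>k. Z (r k)) \<longlonglongrightarrow> z" using tendsto_fst[OF lim] lze by (simp add: o_def)
  have Elim: "(\<lambda>k. E (r k)) \<longlonglongrightarrow> e" using tendsto_snd[OF lim] lze by (simp add: o_def)
  have Ylim0: "Y \<longlonglongrightarrow> x"
  proof -
    have "(\<lambda>k. Y k - x) \<longlonglongrightarrow> 0"
      by (rule Lim_null_comparison[OF _ LIMSEQ_inverse_real_of_nat])
        (use YEZ(1) in \<open>auto simp: dist_norm intro!: always_eventually less_imp_le\<close>)
    then show ?thesis by (rule LIM_zero_cancel)
  qed
  have Ylim: "(\<lambda>k. Y (r k)) \<longlonglongrightarrow> x" using LIMSEQ_subseq_LIMSEQ[OF Ylim0 r] by (simp add: o_def)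
  have gx: "isCont g x" using cont by (simp add: continuous_on_eq_continuous_at)
  have gYlim: "(\<lambda>k. g (Y (r k))) \<longlonglongrightarrow> g x" using isCont_tendsto_compose[OF gx Ylim] .
  have "(z, - e) \<in> limiting_normal_cone (graph_of (\<lambda>y. {g y})) (x, g x)"
    unfolding limiting_normal_cone_def
  proof (intro CollectI exI conjI allI)
    show "(\<lambda>k. (Y (r k), g (Y (r k)))) \<longlonglongrightarrow> (x, g x)" using Ylim gYlim by (rule tendsto_Pair)
    show "(\<lambda>k. (Z (r k), - E (r k))) \<longlonglongrightarrow> (z, - e)" using Zlim tendsto_minus[OF Elim] by (rule tendsto_Pair)
    fix k
    show "(Y (r k), g (Y (r k))) \<in> graph_of (\<lambda>y. {g y})" by (simp add: graph_of_def)
    show "(Z (r k), - E (r k)) \<in> regular_normal_cone (graph_of (\<lambda>y. {g y})) (Y (r k), g (Y (r k)))"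
      by (rule YEZ(4))
  qed
  then have "z \<in> second_order_subdiff g x e"
    by (simp add: second_order_subdiff_def coderivative_def)
  moreover have "e \<noteq> 0" using ne by auto
  ultimately have pos: "inner z e > 0" using pd by blast
  have "(\<lambda>k. inner (Z (r k)) (E (r k))) \<longlonglongrightarrow> inner z e" using Zlim Elim by (rule tendsto_inner)
  moreover have "(\<lambda>k. inverse (real (Suc (r k)))) \<longlonglongrightarrow> 0"
    using LIMSEQ_subseq_LIMSEQ[OF LIMSEQ_inverse_real_of_nat r] by (simp add: o_def)
  ultimately have "inner z e \<le> 0"
    using YEZ(5) by (intro tendsto_le[OF trivial_limit_sequentially]) (auto intro: always_eventually)
  then show False using pos by simp
qed


lemma exist_dir:
  fixes g :: "'a::euclidean_space \<Rightarrow> 'a"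
  assumes lip: "L-lipschitz_on (ball x \<epsilon>0) g" and e0: "\<epsilon>0 > 0"
    and cont: "continuous_on UNIV g"
    and c0: "c > 0" and r0: "r > 0" and mr: "\<forall>y. dist y x < r \<longrightarrow> c * norm (y - x) \<le> norm (g y - g x)"
    and nz: "g x \<noteq> 0"
  shows "\<exists>d. d \<noteq> 0 \<and> - g x \<in> second_order_subdiff g x d"
proof -
  have L0: "L \<ge> 0" using lip by (simp add: lipschitz_on_def)
  define w where "w = g x"
  define \<rho> where "\<rho> = min r \<epsilon>0 / 2"
  have rho0: "\<rho> > 0" using r0 e0 by (simp add: \<rho>_def)
  define A where "A = 2 * norm w / c\<^sup>2"
  have A0: "A \<ge> 0" using c0 by (simp add: A_def)
  define N where "N = A / \<rho> + 1"
  define \<kappa> where "\<kappa> k = real k + N" for k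
  have kap1: "\<kappa> k \<ge> real k + 1" for k using A0 rho0 by (simp add: \<kappa>_def N_def)
  have kap0: "\<kappa> k > 0" for k using kap1[of k] by simp
  have kaprho: "A < \<kappa> k * \<rho>" for k
  proof -
    have "A / \<rho> < \<kappa> k" using A0 rho0 by (simp add: \<kappa>_def N_def)
    then show ?thesis using rho0 by (simp add: divide_less_eq)
  qed
  define F where "F k y = inner w (y - x) + \<kappa> k / 2 * inner (g y - g x) (g y - g x)" for k y
  have "\<exists>ys\<in>cball x \<rho>. \<forall>y\<in>cball x \<rho>. F k ys \<le> F k y" for k
  proof (rule continuous_attains_inf)
    show "continuous_on (cball x \<rho>) (F k)" unfolding F_def
      by (intro continuous_intros continuous_on_subset[OF cont]) auto
  qed (use rho0 in auto)
  then obtain Y where Yc: "\<And>k. Y k \<in> cball x \<rho>" and Ymin: "\<And>k y. y \<in> cball x \<rho> \<Longrightarrow> F k (Y k) \<le> F k y"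
    by metis
  define D where "D k = \<kappa> k *\<^sub>R (g (Y k) - g x)" for k
  have key: "norm (Y k - x) \<le> A / \<kappa> k \<and> norm (D k) \<le> L * A \<and>
     (- w, - D k) \<in> regular_normal_cone (graph_of (\<lambda>y. {g y})) (Y k, g (Y k))" for k
  proof -
    define n where "n = norm (Y k - x)"
    define a where "a = g (Y k) - g x"
    have nr: "n \<le> \<rho>" using Yc[of k] by (simp add: n_def dist_norm norm_minus_commute)
    have cn: "c * n \<le> norm a" using mr nr rho0 r0 by (auto simp: n_def a_def dist_norm \<rho>_def)
    have "F k (Y k) \<le> F k x" using Ymin[of x k] rho0 by simp
    then have "\<kappa> k / 2 * inner a a \<le> - inner w (Y k - x)" by (simp add: F_def a_def)
    also have "\<dots> \<le> norm w * n" using Cauchy_Schwarz_ineq2[of w "Y k - x"] by (simp add: n_def)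
    finally have 1: "\<kappa> k / 2 * (norm a)\<^sup>2 \<le> norm w * n" by (simp add: power2_norm_eq_inner)
    have "(c * n)\<^sup>2 \<le> (norm a)\<^sup>2" using cn c0 by (intro power_mono) (auto simp: n_def)
    then have "\<kappa> k / 2 * (c * n)\<^sup>2 \<le> \<kappa> k / 2 * (norm a)\<^sup>2" using kap0[of k] by (intro mult_left_mono) auto
    with 1 have 2: "\<kappa> k / 2 * c\<^sup>2 * n * n \<le> norm w * n" by (simp add: power2_eq_square algebra_simps)
    have nb: "n \<le> A / \<kappa> k"
    proof (cases "n = 0")
      case True then show ?thesis using A0 kap0[of k] by simp
    next
      case False
      then have "n > 0" by (simp add: n_def)
      with 2 have "\<kappa> k / 2 * c\<^sup>2 * n \<le> norm w" by simp
      then show ?thesis using kap0[of k] c0 by (simp add: A_def field_simps)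
    qed
    have nlt: "n < \<rho>"
    proof -
      have "A / \<kappa> k < \<rho>" using kaprho[of k] kap0[of k] by (simp add: divide_less_eq mult.commute)
      then show ?thesis using nb by simp
    qed
    have "Y k \<in> ball x \<epsilon>0" using nr rho0 by (simp add: dist_norm n_def norm_minus_commute \<rho>_def)
    then have "norm a \<le> L * n" using lip e0 unfolding lipschitz_on_def by (auto simp: dist_norm n_def a_def)
    then have "norm (D k) \<le> \<kappa> k * (L * n)" using kap0[of k] by (simp add: D_def a_def mult_left_mono)
    also have "\<dots> \<le> \<kappa> k * (L * (A / \<kappa> k))" using kap0[of k] L0 nb by (intro mult_left_mono) auto
    also have "\<dots> = L * A" using kap0[of k] by simp
    finally have Db: "norm (D k) \<le> L * A" .
    have nc: "(- w, - D k) \<in> regular_normal_cone (graph_of (\<lambda>y. {g y})) (Y k, g (Y k))"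
    proof (rule rncI[where \<delta> = "\<rho> - n" and C = "\<kappa> k / 2"])
      show "(Y k, g (Y k)) \<in> graph_of (\<lambda>y. {g y})" by (simp add: graph_of_def)
      show "\<rho> - n > 0" using nlt by simp
    next
      fix z assume zg: "z \<in> graph_of (\<lambda>y. {g y})" and zd: "dist z (Y k, g (Y k)) < \<rho> - n"
      obtain y' where z: "z = (y', g y')" using zg by (auto simp: graph_of_def)
      define \<Delta> where "\<Delta> = y' - Y k"
      define b where "b = g y' - g (Y k)"
      have "dist y' (Y k) < \<rho> - n" using zd dist_fst_le[of z "(Y k, g (Y k))"] z by simp
      then have "dist x y' \<le> \<rho>" using dist_triangle[of x y' "Y k"]
        by (simp add: n_def dist_norm norm_minus_commute)
      then have mn: "F k (Y k) \<le> F k y'" using Ymin by simp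
      have zdiff: "z - (Y k, g (Y k)) = (\<Delta>, b)" by (simp add: z \<Delta>_def b_def)
      have gy': "g y' - g x = a + b" by (simp add: a_def b_def)
      have Fd: "F k y' - F k (Y k) = inner w \<Delta> + \<kappa> k * inner a b + \<kappa> k / 2 * inner b b"
        unfolding F_def gy' a_def[symmetric]
        by (simp add: \<Delta>_def inner_diff_right inner_add_left inner_add_right inner_commute algebra_simps)
      have "inner (- w, - D k) (z - (Y k, g (Y k))) = - inner w \<Delta> - \<kappa> k * inner a b"
        by (simp add: zdiff D_def a_def)
      also have "\<dots> = - (F k y' - F k (Y k)) + \<kappa> k / 2 * inner b b" using Fd by simp
      also have "\<dots> \<le> \<kappa> k / 2 * inner b b" using mn by simp
      also have "\<dots> = \<kappa> k / 2 * (norm b)\<^sup>2" by (simp add: power2_norm_eq_inner)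
      also have "\<dots> \<le> \<kappa> k / 2 * (norm (z - (Y k, g (Y k))))\<^sup>2"
        using kap0[of k] norm_snd_le[of b \<Delta>] zdiff by (auto intro!: mult_left_mono power_mono)
      finally show "inner (- w, - D k) (z - (Y k, g (Y k))) \<le> \<kappa> k / 2 * (norm (z - (Y k, g (Y k))))\<^sup>2" .
    qed
    show ?thesis using nb Db nc by (simp add: n_def)
  qed
  have sc: "seq_compact (cball (0::'a) (L * A))" by (intro compact_imp_seq_compact compact_cball)
  have mem: "\<forall>k. D k \<in> cball 0 (L * A)" using key by simp
  obtain d r where r: "strict_mono r" and lim: "(D \<circ> r) \<longlonglongrightarrow> d"
    using seq_compactE[OF sc mem] by blast
  have Ylim0: "Y \<longlonglongrightarrow> x"
  proof -
    have lim0: "(\<lambda>k. A * inverse (real (Suc k))) \<longlonglongrightarrow> 0"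
      using tendsto_mult_left[OF LIMSEQ_inverse_real_of_nat, of A] by simp
    have ev: "\<forall>\<^sub>F k in sequentially. norm (Y k - x) \<le> A * inverse (real (Suc k))"
    proof (intro always_eventually allI)
      fix k
      have "A / \<kappa> k \<le> A / (real k + 1)" using kap1[of k] A0 by (intro divide_left_mono) auto
      moreover have "A / (real k + 1) = A * inverse (real (Suc k))" by (simp add: divide_inverse)
      ultimately show "norm (Y k - x) \<le> A * inverse (real (Suc k))" using key[of k] by linarith
    qed
    have "(\<lambda>k. Y k - x) \<longlonglongrightarrow> 0" using Lim_null_comparison[OF ev lim0] .
    then show ?thesis by (rule LIM_zero_cancel)
  qed
  have Ylim: "(\<lambda>k. Y (r k)) \<longlonglongrightarrow> x" using LIMSEQ_subseq_LIMSEQ[OF Ylim0 r] by (simp add: o_def)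
  have gx: "isCont g x" using cont by (simp add: continuous_on_eq_continuous_at)
  have gYlim: "(\<lambda>k. g (Y (r k))) \<longlonglongrightarrow> g x" using isCont_tendsto_compose[OF gx Ylim] .
  have Dlim: "(\<lambda>k. D (r k)) \<longlonglongrightarrow> d" using lim by (simp add: o_def)
  have nc: "(- w, - d) \<in> limiting_normal_cone (graph_of (\<lambda>y. {g y})) (x, g x)"
    unfolding limiting_normal_cone_def
  proof (intro CollectI exI conjI allI)
    show "(\<lambda>k. (Y (r k), g (Y (r k)))) \<longlonglongrightarrow> (x, g x)" using Ylim gYlim by (rule tendsto_Pair)
    show "(\<lambda>k. (- w, - D (r k))) \<longlonglongrightarrow> (- w, - d)" using tendsto_const tendsto_minus[OF Dlim] by (rule tendsto_Pair)
    fix k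
    show "(Y (r k), g (Y (r k))) \<in> graph_of (\<lambda>y. {g y})" by (simp add: graph_of_def)
    show "(- w, - D (r k)) \<in> regular_normal_cone (graph_of (\<lambda>y. {g y})) (Y (r k), g (Y (r k)))"
      using key by blast
  qed
  have "norm (- w) \<le> L * norm (- d)" by (rule lnc_lip_bound[OF lip e0 nc])
  then have "d \<noteq> 0" using nz by (auto simp: w_def)
  moreover have "- g x \<in> second_order_subdiff g x d"
    using nc by (simp add: second_order_subdiff_def coderivative_def w_def)
  ultimately show ?thesis by blast
qed


theorem proposition3p3:
  fixes \<phi> :: "'a::euclidean_space \<Rightarrow> real" and g :: "'a \<Rightarrow> 'a" and x :: 'a
  assumes grad: "\<And>y. (\<phi> has_derivative (\<lambda>h. inner (g y) h)) (at y)"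
    and cont: "continuous_on UNIV g"
    and lip: "\<exists>\<epsilon>>0. \<exists>L. L-lipschitz_on (ball x \<epsilon>) g"
    and nz: "g x \<noteq> 0"
    and pd: "\<And>u z. u \<noteq> 0 \<Longrightarrow> z \<in> second_order_subdiff g x u \<Longrightarrow> inner z u > 0"
  shows "(\<exists>d. d \<noteq> 0 \<and> - g x \<in> second_order_subdiff g x d)
    \<and> (\<forall>d. - g x \<in> second_order_subdiff g x d \<longrightarrow> inner (g x) d < 0)
    \<and> (\<forall>\<sigma>. 0 < \<sigma> \<and> \<sigma> < 1 \<longrightarrow> (\<forall>d. - g x \<in> second_order_subdiff g x d \<longrightarrow>
         (\<exists>\<delta>>0. \<forall>\<tau>. 0 < \<tau> \<and> \<tau> < \<delta> \<longrightarrow>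
            \<phi> (x + \<tau> *\<^sub>R d) \<le> \<phi> x + \<sigma> * \<tau> * inner (g x) d)))"
proof -
  obtain \<epsilon>0 L where e0: "\<epsilon>0 > 0" and L: "L-lipschitz_on (ball x \<epsilon>0) g" using lip by blast
  obtain c r where c: "c > 0" "r > 0" "\<forall>y. dist y x < r \<longrightarrow> c * norm (y - x) \<le> norm (g y - g x)"
    using metric_reg[OF L e0 cont pd] by blast
  have P1: "\<exists>d. d \<noteq> 0 \<and> - g x \<in> second_order_subdiff g x d"
    by (rule exist_dir[OF L e0 cont c nz])
  have P2: "inner (g x) d < 0" if h: "- g x \<in> second_order_subdiff g x d" for d
  proof (cases "d = 0")
    case True
    then have "(- g x, - 0) \<in> limiting_normal_cone (graph_of (\<lambda>y. {g y})) (x, g x)"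
      using h by (simp add: second_order_subdiff_def coderivative_def)
    then have "norm (- g x) \<le> L * norm (- (0::'a))" by (rule lnc_lip_bound[OF L e0])
    then show ?thesis using nz by simp
  next
    case False
    then have "inner (- g x) d > 0" using pd h by blast
    then show ?thesis by simp
  qed
  have P3: "\<exists>\<delta>>0. \<forall>\<tau>. 0 < \<tau> \<and> \<tau> < \<delta> \<longrightarrow> \<phi> (x + \<tau> *\<^sub>R d) \<le> \<phi> x + \<sigma> * \<tau> * inner (g x) d"
    if s: "0 < \<sigma>" "\<sigma> < 1" and h: "- g x \<in> second_order_subdiff g x d" for \<sigma> d
  proof -
    define D where "D = inner (g x) d"
    have D0: "D < 0" using P2[OF h] by (simp add: D_def)
    have l: "((\<lambda>\<tau>::real. x + \<tau> *\<^sub>R d) has_derivative (\<lambda>h. h *\<^sub>R d)) (at 0)"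
      by (auto intro!: derivative_eq_intros)
    have "((\<lambda>\<tau>. \<phi> (x + \<tau> *\<^sub>R d)) has_derivative (\<lambda>h. inner (g x) (h *\<^sub>R d))) (at 0)"
      using has_derivative_compose[OF l, of \<phi> "\<lambda>h. inner (g x) h"] grad[of x] by simp
    then have "((\<lambda>\<tau>. \<phi> (x + \<tau> *\<^sub>R d)) has_field_derivative D) (at 0)"
      unfolding has_field_derivative_def D_def
      by (rule has_derivative_eq_rhs) (auto simp: fun_eq_iff mult.commute)
    then have "((\<lambda>\<tau>. (\<phi> (x + \<tau> *\<^sub>R d) - \<phi> x) / \<tau>) \<longlongrightarrow> D) (at 0)"
      unfolding has_field_derivative_iff by simp
    moreover have ep: "(\<sigma> - 1) * D > 0" using s D0 by (simp add: mult_neg_neg)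
    ultimately have "eventually (\<lambda>\<tau>. dist ((\<phi> (x + \<tau> *\<^sub>R d) - \<phi> x) / \<tau>) D < (\<sigma> - 1) * D) (at 0)"
      by (simp add: tendsto_iff)
    then obtain \<delta> where d0: "\<delta> > 0" and dd: "\<And>\<tau>. \<tau> \<noteq> 0 \<Longrightarrow> dist \<tau> 0 < \<delta> \<Longrightarrow>
        dist ((\<phi> (x + \<tau> *\<^sub>R d) - \<phi> x) / \<tau>) D < (\<sigma> - 1) * D"
      unfolding eventually_at by auto
    show ?thesis
    proof (intro exI[of _ \<delta>] conjI allI impI d0)
      fix \<tau> :: real assume t: "0 < \<tau> \<and> \<tau> < \<delta>"
      then have "dist ((\<phi> (x + \<tau> *\<^sub>R d) - \<phi> x) / \<tau>) D < (\<sigma> - 1) * D" using dd by simp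
      then have "(\<phi> (x + \<tau> *\<^sub>R d) - \<phi> x) / \<tau> < \<sigma> * D" by (simp add: dist_real_def algebra_simps)
      then have "\<phi> (x + \<tau> *\<^sub>R d) - \<phi> x < \<sigma> * D * \<tau>" using t by (simp add: divide_less_eq)
      then show "\<phi> (x + \<tau> *\<^sub>R d) \<le> \<phi> x + \<sigma> * \<tau> * inner (g x) d" by (simp add: D_def algebra_simps)
    qed
  qed
  show ?thesis using P1 P2 P3 by blast
qed

end
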